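(* If $\mathscr{S}_1,\mathscr{S}_2\subset\mathbb{T}^n$ are projected tropical Metzler spectrahedra, then $\mathrm{tconv}(\mathscr{S}_1\cup\mathscr{S}_2)$ is a projected tropical Metzler spectrahedron.
   Context: $\mathbb{T}=\mathbb{R}\cup\{-\infty\}$. Tropically convex: $\max(\lambda+x,\mu+y)\in X$ for $x,y\in X$, $\lambda,\mu\in\mathbb{T}$ with $\max(\lambda,\mu)=0$; $\mathrm{tconv}(Z)$ is the smallest tropically convex set containing $Z$. Signed tropical numbers $\mathbb{S}=(\{\pm1\}\times\mathbb{R})\cup\{(0,-\infty)\}$, $(1,a)$ positive, $(-1,a)$ negative, modulus $|(s,a)|=a$; a matrix over $\mathbb{S}$ is tropical Metzler if off-diagonal entries are negative or $(0,-\infty)$. For symmetric tropical Metzler $Q^{(0)},\dots,Q^{(N)}$, with $x_0:=0$ and $x\in\mathbb{T}^N$: $Q^{+}_{ii}(x)=\max\{|Q^{(k)}_{ii}|+x_k: Q^{(k)}_{ii}\text{ positive}\}$, $Q^-_{ii}$ likewise with negative entries ($\max\emptyset=-\infty$), $Q_{ij}(x)=\max_k(|Q^{(k)}_{ij}|+x_k)$ ($i\ne j$); the tropical Metzler spectrahedron $\mathcal{S}(Q^{(0)}|Q^{(1)},\dots,Q^{(N)})=\{x\in\mathbb{T}^N: Q^+_{ii}(x)\ge Q^-_{ii}(x)\ \forall i,\ Q^+_{ii}(x)+Q^+_{jj}(x)\ge2Q_{ij}(x)\ \forall i\ne j\}$. A subset of $\mathbb{T}^d$ is a projected tropical Metzler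 spectrahedron if it is the image of a tropical Metzler spectrahedron in $\mathbb{T}^{d+d'}$ ($d'\ge0$) under projection onto the first $d$ coordinates. *)

theory Defs
  imports "HOL-Library.Extended_Real"
begin

text \<open>Tropical numbers T = R \<union> {-\<infinity>} are the extended reals other than +\<infinity>.
  Points of T^n are lists of length n.\<close>

definition Tn :: "nat \<Rightarrow> ereal list set" where
  "Tn n = {x. length x = n \<and> (\<forall>a\<in>set x. a \<noteq> \<infinity>)}"

definition trop_convex :: "ereal list set \<Rightarrow> bool" where
  "trop_convex X \<longleftrightarrow>
     (\<forall>x\<in>X. \<forall>y\<in>X. \<forall>l m. l \<noteq> \<infinity> \<and> m \<noteq> \<infinity> \<and> max l m = 0 \<longrightarrow>
        map2 (\<lambda>a b. max (l + a) (m + b)) x y \<in> X)"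

definition tconv :: "nat \<Rightarrow> ereal list set \<Rightarrow> ereal list set" where
  "tconv n Z = \<Inter>{X. X \<subseteq> Tn n \<and> Z \<subseteq> X \<and> trop_convex X}"

datatype stn = SPos real | SNeg real | SZero

fun smod :: "stn \<Rightarrow> ereal" where
  "smod (SPos a) = ereal a"
| "smod (SNeg a) = ereal a"
| "smod SZero = -\<infinity>"

fun is_pos :: "stn \<Rightarrow> bool" where
  "is_pos (SPos a) = True" | "is_pos _ = False"

fun is_neg :: "stn \<Rightarrow> bool" where
  "is_neg (SNeg a) = True" | "is_neg _ = False"

text \<open>A family Q^(0),...,Q^(N) of m x m matrices: Q k i j, k \<le> N, i,j < m.
  Symmetric tropical Metzler: symmetric, off-diagonal entries negative or zero.\<close>
definition sym_metzler_family :: "nat \<Rightarrow> nat \<Rightarrow> (nat \<Rightarrow> nat \<Rightarrow> nat \<Rightarrow> stn) \<Rightarrow> bool" where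
  "sym_metzler_family m N Q \<longleftrightarrow>
     (\<forall>k\<le>N. \<forall>i<m. \<forall>j<m. Q k i j = Q k j i \<and>
        (i \<noteq> j \<longrightarrow> is_neg (Q k i j) \<or> Q k i j = SZero))"

text \<open>Coordinate x_k with the convention x_0 = 0 (x is a list x_1..x_N).\<close>
definition xcoord :: "ereal list \<Rightarrow> nat \<Rightarrow> ereal" where
  "xcoord x k = (if k = 0 then 0 else x ! (k - 1))"

definition Qplus :: "nat \<Rightarrow> (nat \<Rightarrow> nat \<Rightarrow> nat \<Rightarrow> stn) \<Rightarrow> ereal list \<Rightarrow> nat \<Rightarrow> ereal" where
  "Qplus N Q x i = (SUP k\<in>{k. k \<le> N \<and> is_pos (Q k i i)}. smod (Q k i i) + xcoord x k)"

definition Qminus :: "nat \<Rightarrow> (nat \<Rightarrow> nat \<Rightarrow> nat \<Rightarrow> stn) \<Rightarrow> ereal list \<Rightarrow> nat \<Rightarrow> ereal" where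
  "Qminus N Q x i = (SUP k\<in>{k. k \<le> N \<and> is_neg (Q k i i)}. smod (Q k i i) + xcoord x k)"

definition Qoff :: "nat \<Rightarrow> (nat \<Rightarrow> nat \<Rightarrow> nat \<Rightarrow> stn) \<Rightarrow> ereal list \<Rightarrow> nat \<Rightarrow> nat \<Rightarrow> ereal" where
  "Qoff N Q x i j = (SUP k\<in>{..N}. smod (Q k i j) + xcoord x k)"

definition metzler_spec :: "nat \<Rightarrow> nat \<Rightarrow> (nat \<Rightarrow> nat \<Rightarrow> nat \<Rightarrow> stn) \<Rightarrow> ereal list set" where
  "metzler_spec m N Q = {x \<in> Tn N.
      (\<forall>i<m. Qplus N Q x i \<ge> Qminus N Q x i) \<and>
      (\<forall>i<m. \<forall>j<m. i \<noteq> j \<longrightarrow> Qplus N Q x i + Qplus N Q x j \<ge> 2 * Qoff N Q x i j)}"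

definition proj_metzler_spec :: "nat \<Rightarrow> ereal list set \<Rightarrow> bool" where
  "proj_metzler_spec d S \<longleftrightarrow>
     (\<exists>d' m Q. m \<ge> 1 \<and> sym_metzler_family m (d + d') Q \<and>
        S = take d ` metzler_spec m (d + d') Q)"

end

theory Submission
  imports Defs
begin


type_synonym qfam = "nat \<Rightarrow> nat \<Rightarrow> nat \<Rightarrow> stn"

definition Pp :: "nat \<Rightarrow> qfam \<Rightarrow> (nat \<Rightarrow> ereal) \<Rightarrow> nat \<Rightarrow> ereal" where
  "Pp N Q v i = (SUP k\<in>{k. k \<le> N \<and> is_pos (Q k i i)}. smod (Q k i i) + v k)"
definition Pm :: "nat \<Rightarrow> qfam \<Rightarrow> (nat \<Rightarrow> ereal) \<Rightarrow> nat \<Rightarrow> ereal" where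
  "Pm N Q v i = (SUP k\<in>{k. k \<le> N \<and> is_neg (Q k i i)}. smod (Q k i i) + v k)"
definition Po :: "nat \<Rightarrow> qfam \<Rightarrow> (nat \<Rightarrow> ereal) \<Rightarrow> nat \<Rightarrow> nat \<Rightarrow> ereal" where
  "Po N Q v i j = (SUP k\<in>{..N}. smod (Q k i j) + v k)"

definition hsat :: "nat \<Rightarrow> nat \<Rightarrow> qfam \<Rightarrow> (nat \<Rightarrow> ereal) \<Rightarrow> bool" where
  "hsat m N Q v \<longleftrightarrow> (\<forall>i<m. Pm N Q v i \<le> Pp N Q v i) \<and>
     (\<forall>i<m. \<forall>j<m. i \<noteq> j \<longrightarrow> 2 * Po N Q v i j \<le> Pp N Q v i + Pp N Q v j)"

lemma spec_eq: "metzler_spec m N Q = {x \<in> Tn N. hsat m N Q (xcoord x)}"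
  unfolding metzler_spec_def hsat_def Pp_def Pm_def Po_def Qplus_def Qminus_def Qoff_def by simp

lemma smod_ne_inf[simp]: "smod q \<noteq> \<infinity>"
  by (cases q) auto

lemma ereal_add_max: "(c::ereal) + max a b = max (c+a) (c+b)"
  by (simp add: max_def add_left_mono antisym)

lemma F_max: "(SUP k\<in>A. c k + max (v k) (w k) :: ereal) = max (SUP k\<in>A. c k + v k) (SUP k\<in>A. c k + w k)"
proof (rule antisym)
  show "(SUP k\<in>A. c k + max (v k) (w k)) \<le> max (SUP k\<in>A. c k + v k) (SUP k\<in>A. c k + w k)"
    by (rule SUP_least) (auto simp: ereal_add_max intro: max.coboundedI1 max.coboundedI2 SUP_upper)
  show "max (SUP k\<in>A. c k + v k) (SUP k\<in>A. c k + w k) \<le> (SUP k\<in>A. c k + max (v k) (w k))"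
    by (intro max.boundedI SUP_mono) (meson add_left_mono max.cobounded1 max.cobounded2)+
qed

lemma F_trans: "(SUP k\<in>A. c k + (ereal t + v k) :: ereal) = ereal t + (SUP k\<in>A. c k + v k)"
proof (cases "A = {}")
  case True then show ?thesis by (simp add: bot_ereal_def)
next
  case False
  have "(SUP k\<in>A. c k + (ereal t + v k)) = (SUP k\<in>A. ereal t + (c k + v k))"
    by (simp add: ac_simps)
  also have "\<dots> = ereal t + (SUP k\<in>A. c k + v k)"
    using False by (intro SUP_ereal_add_right) auto
  finally show ?thesis .
qed

lemma Pp_max: "Pp N Q (\<lambda>k. max (v k) (w k)) i = max (Pp N Q v i) (Pp N Q w i)"
  unfolding Pp_def by (rule F_max)
lemma Pm_max: "Pm N Q (\<lambda>k. max (v k) (w k)) i = max (Pm N Q v i) (Pm N Q w i)"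
  unfolding Pm_def by (rule F_max)
lemma Po_max: "Po N Q (\<lambda>k. max (v k) (w k)) i j = max (Po N Q v i j) (Po N Q w i j)"
  unfolding Po_def by (rule F_max)
lemma Pp_trans: "Pp N Q (\<lambda>k. ereal t + v k) i = ereal t + Pp N Q v i"
  unfolding Pp_def by (rule F_trans)
lemma Pm_trans: "Pm N Q (\<lambda>k. ereal t + v k) i = ereal t + Pm N Q v i"
  unfolding Pm_def by (rule F_trans)
lemma Po_trans: "Po N Q (\<lambda>k. ereal t + v k) i j = ereal t + Po N Q v i j"
  unfolding Po_def by (rule F_trans)

lemma hsat_cong: "(\<And>k. k \<le> N \<Longrightarrow> v k = w k) \<Longrightarrow> hsat m N Q v = hsat m N Q w"
proof -
  assume h: "\<And>k. k \<le> N \<Longrightarrow> v k = w k"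
  have "Pp N Q v = Pp N Q w" "Pm N Q v = Pm N Q w" "Po N Q v = Po N Q w"
    unfolding Pp_def Pm_def Po_def using h by (auto intro!: ext SUP_cong)
  then show ?thesis unfolding hsat_def by simp
qed

lemma hsat_max:
  assumes "hsat m N Q v" "hsat m N Q w"
  shows "hsat m N Q (\<lambda>k. max (v k) (w k))"
  unfolding hsat_def Pp_max Pm_max Po_max
proof (intro conjI allI impI)
  fix i assume "i < m"
  then show "max (Pm N Q v i) (Pm N Q w i) \<le> max (Pp N Q v i) (Pp N Q w i)"
    using assms unfolding hsat_def by (meson max.mono)
next
  fix i j assume ij: "i < m" "j < m" "i \<noteq> j"
  have a: "2 * Po N Q v i j \<le> Pp N Q v i + Pp N Q v j" and b: "2 * Po N Q w i j \<le> Pp N Q w i + Pp N Q w j"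
    using assms ij unfolding hsat_def by auto
  have a': "Pp N Q v i + Pp N Q v j \<le> max (Pp N Q v i) (Pp N Q w i) + max (Pp N Q v j) (Pp N Q w j)"
    by (intro add_mono) auto
  have b': "Pp N Q w i + Pp N Q w j \<le> max (Pp N Q v i) (Pp N Q w i) + max (Pp N Q v j) (Pp N Q w j)"
    by (intro add_mono) auto
  show "2 * max (Po N Q v i j) (Po N Q w i j) \<le> max (Pp N Q v i) (Pp N Q w i) + max (Pp N Q v j) (Pp N Q w j)"
  proof (cases "Po N Q v i j \<le> Po N Q w i j")
    case True then show ?thesis using b b' by (simp add: max_def)
  next
    case False then show ?thesis using a a' by (simp add: max_def)
  qed
qed

lemma ereal_trans_le: "(a::ereal) \<le> b \<Longrightarrow> ereal t + a \<le> ereal t + b"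
  by (rule add_left_mono)

lemma ereal_trans2: "2 * (o'::ereal) \<le> p + q \<Longrightarrow> 2 * (ereal t + o') \<le> (ereal t + p) + (ereal t + q)"
  by (cases o'; cases p; cases q) (auto simp: algebra_simps)

lemma hsat_trans:
  assumes "hsat m N Q v"
  shows "hsat m N Q (\<lambda>k. ereal t + v k)"
  using assms unfolding hsat_def Pp_trans Pm_trans Po_trans
proof (intro conjI allI impI)
  fix i assume "i < m" "(\<forall>i<m. Pm N Q v i \<le> Pp N Q v i) \<and> (\<forall>i<m. \<forall>j<m. i \<noteq> j \<longrightarrow> 2 * Po N Q v i j \<le> Pp N Q v i + Pp N Q v j)"
  then show "ereal t + Pm N Q v i \<le> ereal t + Pp N Q v i" by (simp add: ereal_trans_le)
next
  fix i j assume "i < m" "j < m" "i \<noteq> j" "(\<forall>i<m. Pm N Q v i \<le> Pp N Q v i) \<and> (\<forall>i<m. \<forall>j<m. i \<noteq> j \<longrightarrow> 2 * Po N Q v i j \<le> Pp N Q v i + Pp N Q v j)"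
  then show "2 * (ereal t + Po N Q v i j) \<le> ereal t + Pp N Q v i + (ereal t + Pp N Q v j)"
    using ereal_trans2 by blast
qed

lemma hsat_trans_iff:
  assumes "\<And>k. k \<le> N \<Longrightarrow> v k \<noteq> \<infinity>"
  shows "hsat m N Q (\<lambda>k. ereal t + v k) \<longleftrightarrow> hsat m N Q v"
proof
  assume "hsat m N Q (\<lambda>k. ereal t + v k)"
  then have "hsat m N Q (\<lambda>k. ereal (-t) + (ereal t + v k))" by (rule hsat_trans)
  moreover have "\<And>k. k \<le> N \<Longrightarrow> ereal (-t) + (ereal t + v k) = v k"
  proof -
    fix k assume "k \<le> N"
    then have "v k \<noteq> \<infinity>" using assms by blast
    then show "ereal (-t) + (ereal t + v k) = v k" by (cases "v k") auto
  qed
  ultimately show "hsat m N Q v" using hsat_cong[of N "\<lambda>k. ereal (-t) + (ereal t + v k)" v] by simp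
qed (rule hsat_trans)



lemma SUP_bot_outside:
  fixes f :: "nat \<Rightarrow> ereal"
  assumes "B \<subseteq> A" "\<And>k. k \<in> A \<Longrightarrow> k \<notin> B \<Longrightarrow> f k = -\<infinity>"
  shows "(SUP k\<in>A. f k) = (SUP k\<in>B. f k)"
proof (rule antisym)
  show "(SUP k\<in>A. f k) \<le> (SUP k\<in>B. f k)"
  proof (rule SUP_least)
    fix k assume "k \<in> A"
    then show "f k \<le> (SUP k\<in>B. f k)"
      using assms by (cases "k \<in> B") (auto intro: SUP_upper)
  qed
  show "(SUP k\<in>B. f k) \<le> (SUP k\<in>A. f k)" using assms(1) by (rule SUP_subset_mono) simp
qed

lemma SUP_all_bot:
  fixes f :: "nat \<Rightarrow> ereal"
  assumes "\<And>k. k \<in> A \<Longrightarrow> f k = -\<infinity>"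
  shows "(SUP k\<in>A. f k) = -\<infinity>"
  using SUP_bot_outside[of "{}" A f] assms by (simp add: bot_ereal_def)

lemma minf_plus: "v \<noteq> \<infinity> \<Longrightarrow> -\<infinity> + (v::ereal) = -\<infinity>"
  by (cases v) auto

section \<open>Block diagonal\<close>

definition bdiag :: "nat \<Rightarrow> qfam \<Rightarrow> qfam \<Rightarrow> qfam" where
  "bdiag m1 Q1 Q2 k i j = (if i < m1 \<and> j < m1 then Q1 k i j
     else if m1 \<le> i \<and> m1 \<le> j then Q2 k (i - m1) (j - m1) else SZero)"

lemma Pp_bdiag: "Pp N (bdiag m1 Q1 Q2) v i = (if i < m1 then Pp N Q1 v i else Pp N Q2 v (i - m1))"
  unfolding Pp_def bdiag_def by auto
lemma Pm_bdiag: "Pm N (bdiag m1 Q1 Q2) v i = (if i < m1 then Pm N Q1 v i else Pm N Q2 v (i - m1))"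
  unfolding Pm_def bdiag_def by auto

lemma Po_bdiag:
  assumes vfin: "\<And>k. k \<le> N \<Longrightarrow> v k \<noteq> \<infinity>"
  shows "Po N (bdiag m1 Q1 Q2) v i j = (if i < m1 \<and> j < m1 then Po N Q1 v i j
     else if m1 \<le> i \<and> m1 \<le> j then Po N Q2 v (i - m1) (j - m1) else -\<infinity>)"
proof -
  have "(SUP k\<in>{..N}. smod SZero + v k) = -\<infinity>"
    by (rule SUP_all_bot) (simp add: vfin minf_plus)
  then show ?thesis unfolding Po_def bdiag_def by auto
qed

lemma hsat_bdiag:
  assumes vfin: "\<And>k. k \<le> N \<Longrightarrow> v k \<noteq> \<infinity>"
  shows "hsat (m1 + m2) N (bdiag m1 Q1 Q2) v \<longleftrightarrow> hsat m1 N Q1 v \<and> hsat m2 N Q2 v"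
proof
  assume h: "hsat (m1 + m2) N (bdiag m1 Q1 Q2) v"
  have h1: "\<And>i. i < m1 + m2 \<Longrightarrow> Pm N (bdiag m1 Q1 Q2) v i \<le> Pp N (bdiag m1 Q1 Q2) v i"
    and h2: "\<And>i j. i < m1 + m2 \<Longrightarrow> j < m1 + m2 \<Longrightarrow> i \<noteq> j \<Longrightarrow>
       2 * Po N (bdiag m1 Q1 Q2) v i j \<le> Pp N (bdiag m1 Q1 Q2) v i + Pp N (bdiag m1 Q1 Q2) v j"
    using h unfolding hsat_def by auto
  have "hsat m1 N Q1 v"
    unfolding hsat_def
  proof (intro conjI allI impI)
    fix i assume "i < m1" then show "Pm N Q1 v i \<le> Pp N Q1 v i"
      using h1[of i] by (simp add: Pp_bdiag Pm_bdiag)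
  next
    fix i j assume "i < m1" "j < m1" "i \<noteq> j"
    then show "2 * Po N Q1 v i j \<le> Pp N Q1 v i + Pp N Q1 v j"
      using h2[of i j] by (simp add: Pp_bdiag Po_bdiag[OF vfin])
  qed
  moreover have "hsat m2 N Q2 v"
    unfolding hsat_def
  proof (intro conjI allI impI)
    fix i assume "i < m2" then show "Pm N Q2 v i \<le> Pp N Q2 v i"
      using h1[of "i + m1"] by (simp add: Pp_bdiag Pm_bdiag)
  next
    fix i j assume "i < m2" "j < m2" "i \<noteq> j"
    then show "2 * Po N Q2 v i j \<le> Pp N Q2 v i + Pp N Q2 v j"
      using h2[of "i + m1" "j + m1"] by (simp add: Pp_bdiag Po_bdiag[OF vfin])
  qed
  ultimately show "hsat m1 N Q1 v \<and> hsat m2 N Q2 v" ..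
next
  assume h: "hsat m1 N Q1 v \<and> hsat m2 N Q2 v"
  show "hsat (m1 + m2) N (bdiag m1 Q1 Q2) v"
    unfolding hsat_def
  proof (intro conjI allI impI)
    fix i assume "i < m1 + m2"
    then show "Pm N (bdiag m1 Q1 Q2) v i \<le> Pp N (bdiag m1 Q1 Q2) v i"
      using h unfolding hsat_def by (auto simp: Pp_bdiag Pm_bdiag)
  next
    fix i j assume ij: "i < m1 + m2" "j < m1 + m2" "i \<noteq> j"
    show "2 * Po N (bdiag m1 Q1 Q2) v i j \<le> Pp N (bdiag m1 Q1 Q2) v i + Pp N (bdiag m1 Q1 Q2) v j"
    proof (cases "i < m1 \<and> j < m1")
      case True then show ?thesis using h ij unfolding hsat_def by (auto simp: Pp_bdiag Po_bdiag[OF vfin])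
    next
      case F1: False
      show ?thesis
      proof (cases "m1 \<le> i \<and> m1 \<le> j")
        case True
        have "i - m1 < m2" "j - m1 < m2" "i - m1 \<noteq> j - m1" using True ij by auto
        then show ?thesis using h True unfolding hsat_def by (auto simp: Pp_bdiag Po_bdiag[OF vfin])
      next
        case False
        have "Po N (bdiag m1 Q1 Q2) v i j = -\<infinity>" by (subst Po_bdiag[OF vfin]) (use F1 False in auto)
        then show ?thesis by simp
      qed
    qed
  qed
qed

lemma sym_bdiag:
  assumes "sym_metzler_family m1 N Q1" "sym_metzler_family m2 N Q2"
  shows "sym_metzler_family (m1 + m2) N (bdiag m1 Q1 Q2)"
  unfolding sym_metzler_family_def
proof (intro allI impI conjI)
  fix k i j assume "k \<le> N" "i < m1 + m2" "j < m1 + m2"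
  then show "bdiag m1 Q1 Q2 k i j = bdiag m1 Q1 Q2 k j i"
    using assms unfolding sym_metzler_family_def bdiag_def by auto
  assume "i \<noteq> j"
  show "is_neg (bdiag m1 Q1 Q2 k i j) \<or> bdiag m1 Q1 Q2 k i j = SZero"
  proof (cases "i < m1 \<and> j < m1")
    case True then show ?thesis using assms \<open>k \<le> N\<close> \<open>i \<noteq> j\<close>
      unfolding sym_metzler_family_def bdiag_def by auto
  next
    case F: False
    show ?thesis
    proof (cases "m1 \<le> i \<and> m1 \<le> j")
      case True
      then have "i - m1 < m2" "j - m1 < m2" "i - m1 \<noteq> j - m1"
        using \<open>i < m1 + m2\<close> \<open>j < m1 + m2\<close> \<open>i \<noteq> j\<close> by auto
      then show ?thesis using assms(2) \<open>k \<le> N\<close> True F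
        unfolding sym_metzler_family_def bdiag_def by auto
    next
      case False then show ?thesis using F unfolding bdiag_def by auto
    qed
  qed
qed

fun bdl :: "(nat \<times> qfam) list \<Rightarrow> nat \<times> qfam" where
  "bdl [] = (0, \<lambda>k i j. SZero)"
| "bdl (b # bs) = (fst b + fst (bdl bs), bdiag (fst b) (snd b) (snd (bdl bs)))"

lemma hsat_bdl:
  assumes vfin: "\<And>k. k \<le> N \<Longrightarrow> v k \<noteq> \<infinity>"
  shows "hsat (fst (bdl L)) N (snd (bdl L)) v \<longleftrightarrow> (\<forall>b\<in>set L. hsat (fst b) N (snd b) v)"
proof (induction L)
  case Nil then show ?case by (simp add: hsat_def)
next
  case (Cons b L) then show ?case by (simp add: hsat_bdiag[OF vfin])
qed

lemma sym_bdl: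
  "(\<forall>b\<in>set L. sym_metzler_family (fst b) N (snd b)) \<Longrightarrow> sym_metzler_family (fst (bdl L)) N (snd (bdl L))"
proof (induction L)
  case Nil then show ?case by (simp add: sym_metzler_family_def)
next
  case (Cons b L) then show ?case by (simp add: sym_bdiag)
qed

section \<open>Reindexing\<close>

definition reidx :: "nat \<Rightarrow> (nat \<Rightarrow> nat) \<Rightarrow> qfam \<Rightarrow> qfam" where
  "reidx a \<sigma> Q k i j = (if k \<in> \<sigma> ` {..a} then Q (inv_into {..a} \<sigma> k) i j else SZero)"

lemma SUP_reidx:
  assumes inj: "inj_on \<sigma> {..a}" and A: "A \<subseteq> {..a}"
  shows "(SUP k\<in>\<sigma> ` A. smod (reidx a \<sigma> Q k i j) + v k) = (SUP k\<in>A. smod (Q k i j) + v (\<sigma> k))"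
proof -
  have "(SUP k\<in>\<sigma> ` A. smod (reidx a \<sigma> Q k i j) + v k) = (SUP k\<in>A. smod (reidx a \<sigma> Q (\<sigma> k) i j) + v (\<sigma> k))"
    by (simp add: image_comp)
  also have "\<dots> = (SUP k\<in>A. smod (Q k i j) + v (\<sigma> k))"
  proof (rule SUP_cong)
    fix k assume "k \<in> A"
    then have "k \<in> {..a}" using A by auto
    then show "smod (reidx a \<sigma> Q (\<sigma> k) i j) + v (\<sigma> k) = smod (Q k i j) + v (\<sigma> k)"
      unfolding reidx_def using inv_into_f_f[OF inj] by auto
  qed simp
  finally show ?thesis .
qed

context
  fixes a N :: nat and \<sigma> :: "nat \<Rightarrow> nat"
  assumes inj: "inj_on \<sigma> {..a}" and rng: "\<sigma> ` {..a} \<subseteq> {..N}"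
begin

lemma Pp_reidx: "Pp N (reidx a \<sigma> Q) v i = Pp a Q (v \<circ> \<sigma>) i"
proof -
  have e: "{k. k \<le> N \<and> is_pos (reidx a \<sigma> Q k i i)} = \<sigma> ` {k. k \<le> a \<and> is_pos (Q k i i)}"
    using rng unfolding reidx_def by (auto simp: inv_into_f_f[OF inj] dest: inj_onD[OF inj])
  show ?thesis unfolding Pp_def e by (subst SUP_reidx[OF inj]) auto
qed

lemma Pm_reidx: "Pm N (reidx a \<sigma> Q) v i = Pm a Q (v \<circ> \<sigma>) i"
proof -
  have e: "{k. k \<le> N \<and> is_neg (reidx a \<sigma> Q k i i)} = \<sigma> ` {k. k \<le> a \<and> is_neg (Q k i i)}"
    using rng unfolding reidx_def by (auto simp: inv_into_f_f[OF inj] dest: inj_onD[OF inj])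
  show ?thesis unfolding Pm_def e by (subst SUP_reidx[OF inj]) auto
qed

lemma Po_reidx:
  assumes vfin: "\<And>k. k \<le> N \<Longrightarrow> v k \<noteq> \<infinity>"
  shows "Po N (reidx a \<sigma> Q) v i j = Po a Q (v \<circ> \<sigma>) i j"
proof -
  have "Po N (reidx a \<sigma> Q) v i j = (SUP k\<in>\<sigma> ` {..a}. smod (reidx a \<sigma> Q k i j) + v k)"
    unfolding Po_def
    by (rule SUP_bot_outside) (use rng vfin in \<open>auto simp: reidx_def minf_plus\<close>)
  also have "\<dots> = Po a Q (v \<circ> \<sigma>) i j"
    unfolding Po_def by (subst SUP_reidx[OF inj]) auto
  finally show ?thesis .
qed

lemma hsat_reidx:
  assumes vfin: "\<And>k. k \<le> N \<Longrightarrow> v k \<noteq> \<infinity>"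
  shows "hsat m N (reidx a \<sigma> Q) v \<longleftrightarrow> hsat m a Q (v \<circ> \<sigma>)"
  by (simp add: hsat_def Pp_reidx Pm_reidx Po_reidx vfin)

lemma sym_reidx:
  assumes "sym_metzler_family m a Q"
  shows "sym_metzler_family m N (reidx a \<sigma> Q)"
  unfolding sym_metzler_family_def
proof (intro allI impI conjI)
  fix k i j assume k: "k \<le> N" and ij: "i < m" "j < m"
  show "reidx a \<sigma> Q k i j = reidx a \<sigma> Q k j i"
    using assms ij unfolding sym_metzler_family_def reidx_def by (auto simp: inv_into_f_f[OF inj])
  assume "i \<noteq> j"
  show "is_neg (reidx a \<sigma> Q k i j) \<or> reidx a \<sigma> Q k i j = SZero"
  proof (cases "k \<in> \<sigma> ` {..a}")
    case True
    then obtain x where x: "x \<le> a" "k = \<sigma> x" by auto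
    have "is_neg (Q x i j) \<or> Q x i j = SZero" using assms x ij \<open>i \<noteq> j\<close> unfolding sym_metzler_family_def by blast
    then show ?thesis using x unfolding reidx_def by (simp add: inv_into_f_f[OF inj])
  qed (simp add: reidx_def)
qed

end

definition lin1 :: "nat set \<Rightarrow> nat set \<Rightarrow> qfam" where
  "lin1 P G k i j = (if k \<in> P then SPos 0 else if k \<in> G then SNeg 0 else SZero)"

lemma hsat_lin1:
  assumes "P \<inter> G = {}"
  shows "hsat 1 N (lin1 P G) v \<longleftrightarrow> (SUP k\<in>G \<inter> {..N}. v k) \<le> (SUP k\<in>P \<inter> {..N}. v k)"
proof -
  have e1: "{k. k \<le> N \<and> is_pos (lin1 P G k 0 0)} = P \<inter> {..N}" unfolding lin1_def by auto
  have e2: "{k. k \<le> N \<and> is_neg (lin1 P G k 0 0)} = G \<inter> {..N}" using assms unfolding lin1_def by auto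
  have p: "Pp N (lin1 P G) v 0 = (SUP k\<in>P \<inter> {..N}. v k)"
    unfolding Pp_def e1 by (rule SUP_cong) (auto simp: lin1_def zero_ereal_def[symmetric])
  have m: "Pm N (lin1 P G) v 0 = (SUP k\<in>G \<inter> {..N}. v k)"
    unfolding Pm_def e2 using assms by (intro SUP_cong) (auto simp: lin1_def zero_ereal_def[symmetric])
  show ?thesis unfolding hsat_def p[symmetric] m[symmetric] by auto
qed

lemma sym_lin1: "sym_metzler_family 1 N (lin1 P G)"
  unfolding sym_metzler_family_def by auto

definition quad2 :: "nat \<Rightarrow> nat \<Rightarrow> nat \<Rightarrow> qfam" where
  "quad2 a b s k i j = (if i = 0 \<and> j = 0 then (if k = a then SPos 0 else SZero)
     else if i = 1 \<and> j = 1 then (if k = b then SPos 0 else SZero)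
     else if k = s then SNeg 0 else SZero)"

lemma hsat_quad2:
  assumes vfin: "\<And>k. k \<le> N \<Longrightarrow> v k \<noteq> \<infinity>" and le: "a \<le> N" "b \<le> N" "s \<le> N"
  shows "hsat 2 N (quad2 a b s) v \<longleftrightarrow> 2 * v s \<le> v a + v b"
proof -
  have p0: "Pp N (quad2 a b s) v 0 = v a"
  proof -
    have "{k. k \<le> N \<and> is_pos (quad2 a b s k 0 0)} = {a}" using le unfolding quad2_def by auto
    then show ?thesis unfolding Pp_def by (simp add: quad2_def zero_ereal_def[symmetric])
  qed
  have p1: "Pp N (quad2 a b s) v 1 = v b"
  proof -
    have "{k. k \<le> N \<and> is_pos (quad2 a b s k 1 1)} = {b}" using le unfolding quad2_def by auto
    then show ?thesis unfolding Pp_def by (simp add: quad2_def zero_ereal_def[symmetric])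
  qed
  have m: "i < 2 \<Longrightarrow> Pm N (quad2 a b s) v i = -\<infinity>" for i
  proof -
    assume "i < 2"
    then have e: "{k. k \<le> N \<and> is_neg (quad2 a b s k i i)} = {}" unfolding quad2_def by auto
    show ?thesis unfolding Pm_def e by (simp add: bot_ereal_def)
  qed
  have o: "i < 2 \<Longrightarrow> j < 2 \<Longrightarrow> i \<noteq> j \<Longrightarrow> Po N (quad2 a b s) v i j = v s" for i j
  proof -
    assume ij: "i < 2" "j < 2" "i \<noteq> j"
    have "Po N (quad2 a b s) v i j = (SUP k\<in>{s}. smod (quad2 a b s k i j) + v k)"
      unfolding Po_def by (rule SUP_bot_outside) (use le ij vfin in \<open>auto simp: quad2_def minf_plus\<close>)
    also have "\<dots> = v s" using ij by (simp add: quad2_def zero_ereal_def[symmetric])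
    finally show ?thesis .
  qed
  have p1': "Pp N (quad2 a b s) v (Suc 0) = v b" using p1 by simp
  have "hsat 2 N (quad2 a b s) v \<longleftrightarrow> (\<forall>i<2. \<forall>j<2. i \<noteq> j \<longrightarrow> 2 * v s \<le> Pp N (quad2 a b s) v i + Pp N (quad2 a b s) v j)"
    unfolding hsat_def using m o by auto
  also have "\<dots> \<longleftrightarrow> 2 * v s \<le> v a + v b"
    by (auto simp: p1' simp: less_2_cases_iff p0 p1 add.commute)
  finally show ?thesis .
qed

lemma sym_quad2: "sym_metzler_family 2 N (quad2 a b s)"
  unfolding sym_metzler_family_def quad2_def by (auto simp: less_2_cases_iff)



lemma lin1_one:
  assumes "p \<le> N" "q \<le> N" "p \<noteq> q"
  shows "hsat 1 N (lin1 {p} {q}) v \<longleftrightarrow> v q \<le> v p"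
proof -
  have "hsat 1 N (lin1 {p} {q}) v \<longleftrightarrow> (SUP k\<in>{q}\<inter>{..N}. v k) \<le> (SUP k\<in>{p}\<inter>{..N}. v k)"
    by (rule hsat_lin1) (use assms in auto)
  moreover have "{p} \<inter> {..N} = {p}" "{q} \<inter> {..N} = {q}" using assms by auto
  ultimately show ?thesis by simp
qed

lemma lin1_two:
  assumes "p \<le> N" "q \<le> N" "r \<le> N" "r \<noteq> p" "r \<noteq> q"
  shows "hsat 1 N (lin1 {p, q} {r}) v \<longleftrightarrow> v r \<le> max (v p) (v q)"
proof -
  have "hsat 1 N (lin1 {p, q} {r}) v \<longleftrightarrow> (SUP k\<in>{r}\<inter>{..N}. v k) \<le> (SUP k\<in>{p,q}\<inter>{..N}. v k)"
    by (rule hsat_lin1) (use assms in auto)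
  moreover have "{p, q} \<inter> {..N} = {p, q}" "{r} \<inter> {..N} = {r}" using assms by auto
  ultimately show ?thesis by (simp add: sup_max)
qed

lemma hsat_minf: "hsat m N Q (\<lambda>k. -\<infinity>)"
proof -
  have e: "(SUP k\<in>A. smod (f k) + (-\<infinity>::ereal)) = -\<infinity>" for A :: "nat set" and f
    by (rule SUP_all_bot) simp
  show ?thesis unfolding hsat_def Pp_def Pm_def Po_def e by simp
qed

definition lst :: "nat \<Rightarrow> (nat \<Rightarrow> ereal) \<Rightarrow> ereal list" where
  "lst N g = map (\<lambda>i. g (Suc i)) [0..<N]"

lemma length_lst[simp]: "length (lst N g) = N"
  by (simp add: lst_def)

lemma xcoord_lst: "1 \<le> k \<Longrightarrow> k \<le> N \<Longrightarrow> xcoord (lst N g) k = g k"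
  unfolding xcoord_def lst_def by (cases k) auto

lemma xcoord_0[simp]: "xcoord x 0 = 0"
  by (simp add: xcoord_def)

lemma lst_Tn: "lst N g \<in> Tn N \<longleftrightarrow> (\<forall>k. 1 \<le> k \<and> k \<le> N \<longrightarrow> g k \<noteq> \<infinity>)"
proof -
  have "set (lst N g) = g ` {Suc 0..<Suc N}"
  proof -
    have "set (lst N g) = (\<lambda>x. g (Suc x)) ` {0..<N}" by (simp add: lst_def)
    also have "\<dots> = g ` (Suc ` {0..<N})" by (simp only: image_image)
    also have "\<dots> = g ` {Suc 0..<Suc N}" by (simp only: image_Suc_atLeastLessThan)
    finally show ?thesis .
  qed
  then show ?thesis unfolding Tn_def by (auto simp: Suc_le_eq)
qed

lemma lst_xcoord: "length x = N \<Longrightarrow> lst N (xcoord x) = x"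
  unfolding lst_def xcoord_def by (rule nth_equalityI) auto

lemma Tn_xcoord: "x \<in> Tn N \<Longrightarrow> 1 \<le> k \<Longrightarrow> k \<le> N \<Longrightarrow> xcoord x k \<noteq> \<infinity>"
  unfolding Tn_def xcoord_def by auto

lemma Tn_xcoord': "x \<in> Tn N \<Longrightarrow> k \<le> N \<Longrightarrow> xcoord x k \<noteq> \<infinity>"
  using Tn_xcoord[of x N k] by (cases "k = 0") auto

lemma take_lst: "n \<le> N \<Longrightarrow> take n (lst N g) = lst n g"
  unfolding lst_def by (simp add: take_map)

lemma lst_cong: "(\<And>k. 1 \<le> k \<Longrightarrow> k \<le> N \<Longrightarrow> g k = h k) \<Longrightarrow> lst N g = lst N h"
  unfolding lst_def by (auto simp: Suc_le_eq)

lemma map2_lst: "map2 F (lst N g) (lst N h) = lst N (\<lambda>k. F (g k) (h k))"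
  unfolding lst_def by (rule nth_equalityI) auto

lemma mem_spec_lst:
  "lst N g \<in> metzler_spec m N Q \<longleftrightarrow> (\<forall>k. 1 \<le> k \<and> k \<le> N \<longrightarrow> g k \<noteq> \<infinity>) \<and> hsat m N Q (\<lambda>k. if k = 0 then 0 else g k)"
proof -
  have "hsat m N Q (xcoord (lst N g)) = hsat m N Q (\<lambda>k. if k = 0 then 0 else g k)"
    by (rule hsat_cong) (auto simp: xcoord_lst)
  then show ?thesis unfolding spec_eq using lst_Tn by auto
qed

lemma ereal_ne_inf_plus: "(a::ereal) \<noteq> \<infinity> \<Longrightarrow> b \<noteq> \<infinity> \<Longrightarrow> a + b \<noteq> \<infinity>"
  by (cases a; cases b) auto

lemma spec_convex: "trop_convex (metzler_spec m N Q)"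
  unfolding trop_convex_def
proof (intro ballI allI impI)
  fix x y and l m' :: ereal assume x: "x \<in> metzler_spec m N Q" and y: "y \<in> metzler_spec m N Q"
    and lm: "l \<noteq> \<infinity> \<and> m' \<noteq> \<infinity> \<and> max l m' = 0"
  have xT: "x \<in> Tn N" and yT: "y \<in> Tn N" and hx: "hsat m N Q (xcoord x)" and hy: "hsat m N Q (xcoord y)"
    using x y unfolding spec_eq by auto
  have lx: "length x = N" and ly: "length y = N" using xT yT unfolding Tn_def by auto
  define h where "h = (\<lambda>k. max (l + xcoord x k) (m' + xcoord y k))"
  have r: "map2 (\<lambda>a b. max (l + a) (m' + b)) x y = lst N h"
    unfolding h_def
    by (subst lst_xcoord[OF lx, symmetric], subst lst_xcoord[OF ly, symmetric], subst map2_lst) (rule refl)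
  have fin: "\<And>k. 1 \<le> k \<and> k \<le> N \<longrightarrow> h k \<noteq> \<infinity>"
  proof
    fix k assume k: "1 \<le> k \<and> k \<le> N"
    have "l + xcoord x k \<noteq> \<infinity>" "m' + xcoord y k \<noteq> \<infinity>"
      using lm Tn_xcoord[OF xT] Tn_xcoord[OF yT] k by (auto intro!: ereal_ne_inf_plus)
    then show "h k \<noteq> \<infinity>" unfolding h_def by (simp add: max_def)
  qed
  have h0: "h 0 = 0" unfolding h_def using lm by simp
  have hs: "hsat m N Q h"
  proof (cases "l = -\<infinity>")
    case True
    then have "m' = 0" using lm by (simp add: max_def split: if_splits)
    have "hsat m N Q h = hsat m N Q (xcoord y)"
    proof (rule hsat_cong)
      fix k assume "k \<le> N"
      then have "xcoord x k \<noteq> \<infinity>" using Tn_xcoord'[OF xT] by blast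
      then show "h k = xcoord y k" unfolding h_def using True \<open>m' = 0\<close> by (simp add: minf_plus)
    qed
    then show ?thesis using hy by simp
  next
    case Fl: False
    show ?thesis
    proof (cases "m' = -\<infinity>")
      case True
      then have "l = 0" using lm by (simp add: max_def split: if_splits)
      have "hsat m N Q h = hsat m N Q (xcoord x)"
      proof (rule hsat_cong)
        fix k assume "k \<le> N"
        then have "xcoord y k \<noteq> \<infinity>" using Tn_xcoord'[OF yT] by blast
        then show "h k = xcoord x k" unfolding h_def using True \<open>l = 0\<close> by (simp add: minf_plus)
      qed
      then show ?thesis using hx by simp
    next
      case False
      obtain l' where l': "l = ereal l'" using Fl lm by (cases l) auto
      obtain m'' where m'': "m' = ereal m''" using False lm by (cases m') auto
      show ?thesis unfolding h_def l' m''
        by (intro hsat_max hsat_trans hx hy)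
    qed
  qed
  have "hsat m N Q (\<lambda>k. if k = 0 then 0 else h k)"
    using hs by (subst hsat_cong[where w=h]) (auto simp: h0)
  then show "map2 (\<lambda>a b. max (l + a) (m' + b)) x y \<in> metzler_spec m N Q"
    unfolding r mem_spec_lst using fin by auto
qed

lemma take_convex:
  assumes "trop_convex W" shows "trop_convex (take n ` W)"
  unfolding trop_convex_def
proof (intro ballI allI impI)
  fix x y and l m :: ereal assume "x \<in> take n ` W" "y \<in> take n ` W" and lm: "l \<noteq> \<infinity> \<and> m \<noteq> \<infinity> \<and> max l m = 0"
  then obtain x' y' where "x' \<in> W" "y' \<in> W" "x = take n x'" "y = take n y'" by auto
  moreover have "map2 (\<lambda>a b. max (l + a) (m + b)) x' y' \<in> W"
    using assms \<open>x' \<in> W\<close> \<open>y' \<in> W\<close> lm unfolding trop_convex_def by blast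
  moreover have "map2 (\<lambda>a b. max (l + a) (m + b)) (take n x') (take n y') = take n (map2 (\<lambda>a b. max (l + a) (m + b)) x' y')"
    by (simp add: take_map take_zip)
  ultimately show "map2 (\<lambda>a b. max (l + a) (m + b)) x y \<in> take n ` W"
    by (metis image_eqI)
qed

lemma SUP_fin_ne_inf:
  assumes "finite A" "\<And>k. k \<in> A \<Longrightarrow> (f k::ereal) \<noteq> \<infinity>"
  shows "(SUP k\<in>A. f k) \<noteq> \<infinity>"
  using assms
proof (induction A rule: finite_induct)
  case empty then show ?case by (simp add: bot_ereal_def)
next
  case (insert x F) then show ?case by (simp add: sup_max max_def)
qed



locale cons =
  fixes n a b m1 m2 :: nat and Q1 Q2 :: qfam
  assumes na: "n \<le> a" and nb: "n \<le> b"
begin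

definition NN :: nat where "NN = n + a + b + 6"
definition s1 :: "nat \<Rightarrow> nat" where "s1 k = (if k = 0 then n + a + 1 else n + k)"
definition s2 :: "nat \<Rightarrow> nat" where "s2 k = (if k = 0 then n + a + b + 4 else n + a + 3 + k)"

definition blocks :: "(nat \<times> qfam) list" where
  "blocks = [(m1, reidx a s1 Q1), (m2, reidx b s2 Q2),
     (1, lin1 {0} {n+a+1}), (1, lin1 {0} {n+a+b+4}), (1, lin1 {n+a+1, n+a+b+4} {0}),
     (2, quad2 (n+a+1) (n+a+3) (n+a+2)), (2, quad2 (n+a+b+4) (n+a+b+6) (n+a+b+5))]
   @ map (\<lambda>i. (1, lin1 {i} {s1 i})) [1..<Suc n]
   @ map (\<lambda>i. (1, lin1 {i} {s2 i})) [1..<Suc n]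
   @ map (\<lambda>i. (1, lin1 {s1 i, s2 i} {i})) [1..<Suc n]
   @ map (\<lambda>k. (1, lin1 {n+a+2} {s1 k})) [1..<Suc a]
   @ map (\<lambda>k. (1, lin1 {n+a+b+5} {s2 k})) [1..<Suc b]"

definition MM where "MM = fst (bdl blocks)"
definition QQ where "QQ = snd (bdl blocks)"

definition Cond :: "(nat \<Rightarrow> ereal) \<Rightarrow> bool" where
  "Cond v \<longleftrightarrow> hsat m1 a Q1 (v \<circ> s1) \<and> hsat m2 b Q2 (v \<circ> s2) \<and>
     v (n+a+1) \<le> 0 \<and> v (n+a+b+4) \<le> 0 \<and> 0 \<le> max (v (n+a+1)) (v (n+a+b+4)) \<and>
     2 * v (n+a+2) \<le> v (n+a+1) + v (n+a+3) \<and> 2 * v (n+a+b+5) \<le> v (n+a+b+4) + v (n+a+b+6) \<and>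
     (\<forall>i\<in>{1..n}. v (s1 i) \<le> v i) \<and>
     (\<forall>i\<in>{1..n}. v (s2 i) \<le> v i) \<and>
     (\<forall>i\<in>{1..n}. v i \<le> max (v (s1 i)) (v (s2 i))) \<and>
     (\<forall>k\<in>{1..a}. v (s1 k) \<le> v (n+a+2)) \<and>
     (\<forall>k\<in>{1..b}. v (s2 k) \<le> v (n+a+b+5))"

lemma inj1: "inj_on s1 {..a}" unfolding inj_on_def s1_def by auto
lemma rng1: "s1 ` {..a} \<subseteq> {..NN}" unfolding s1_def NN_def by auto
lemma inj2: "inj_on s2 {..b}" unfolding inj_on_def s2_def by auto
lemma rng2: "s2 ` {..b} \<subseteq> {..NN}" unfolding s2_def NN_def by auto

lemma ball_map_iff:
  assumes "\<And>i. i \<in> set xs \<Longrightarrow> (hsat 1 NN (f i) v \<longleftrightarrow> P i)"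
  shows "(\<forall>bl\<in>set (map (\<lambda>i. (1, f i)) xs). hsat (fst bl) NN (snd bl) v) \<longleftrightarrow> (\<forall>i\<in>set xs. P i)"
  using assms by auto

lemma sem:
  assumes v0: "v 0 = 0" and vfin: "\<And>k. k \<le> NN \<Longrightarrow> v k \<noteq> \<infinity>"
  shows "hsat MM NN QQ v \<longleftrightarrow> Cond v"
proof -
  have H: "hsat MM NN QQ v \<longleftrightarrow> (\<forall>bl\<in>set blocks. hsat (fst bl) NN (snd bl) v)"
    unfolding MM_def QQ_def by (rule hsat_bdl[OF vfin])
  have r1: "hsat m1 NN (reidx a s1 Q1) v \<longleftrightarrow> hsat m1 a Q1 (v \<circ> s1)"
    by (rule hsat_reidx[OF inj1 rng1 vfin])
  have r2: "hsat m2 NN (reidx b s2 Q2) v \<longleftrightarrow> hsat m2 b Q2 (v \<circ> s2)"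
    by (rule hsat_reidx[OF inj2 rng2 vfin])
  have l1: "hsat 1 NN (lin1 {0} {n+a+1}) v \<longleftrightarrow> v (n+a+1) \<le> 0"
    using lin1_one[of 0 NN "n+a+1" v] v0 by (simp add: NN_def)
  have l2: "hsat 1 NN (lin1 {0} {n+a+b+4}) v \<longleftrightarrow> v (n+a+b+4) \<le> 0"
    using lin1_one[of 0 NN "n+a+b+4" v] v0 by (simp add: NN_def)
  have l3: "hsat 1 NN (lin1 {n+a+1, n+a+b+4} {0}) v \<longleftrightarrow> 0 \<le> max (v (n+a+1)) (v (n+a+b+4))"
    using lin1_two[of "n+a+1" NN "n+a+b+4" 0 v] v0 by (simp add: NN_def)
  have q1: "hsat 2 NN (quad2 (n+a+1) (n+a+3) (n+a+2)) v \<longleftrightarrow> 2 * v (n+a+2) \<le> v (n+a+1) + v (n+a+3)"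
    by (rule hsat_quad2[OF vfin]) (auto simp: NN_def)
  have q2: "hsat 2 NN (quad2 (n+a+b+4) (n+a+b+6) (n+a+b+5)) v \<longleftrightarrow> 2 * v (n+a+b+5) \<le> v (n+a+b+4) + v (n+a+b+6)"
    by (rule hsat_quad2[OF vfin]) (auto simp: NN_def)
  have m1': "(\<forall>bl\<in>set (map (\<lambda>i. (1, lin1 {i} {s1 i})) [1..<Suc n]). hsat (fst bl) NN (snd bl) v)
      \<longleftrightarrow> (\<forall>i\<in>set [1..<Suc n]. v (s1 i) \<le> v i)"
    by (rule ball_map_iff, rule lin1_one) (use na nb in \<open>auto simp: s1_def NN_def\<close>)
  have m2': "(\<forall>bl\<in>set (map (\<lambda>i. (1, lin1 {i} {s2 i})) [1..<Suc n]). hsat (fst bl) NN (snd bl) v)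
      \<longleftrightarrow> (\<forall>i\<in>set [1..<Suc n]. v (s2 i) \<le> v i)"
    by (rule ball_map_iff, rule lin1_one) (use na nb in \<open>auto simp: s2_def NN_def\<close>)
  have m3': "(\<forall>bl\<in>set (map (\<lambda>i. (1, lin1 {s1 i, s2 i} {i})) [1..<Suc n]). hsat (fst bl) NN (snd bl) v)
      \<longleftrightarrow> (\<forall>i\<in>set [1..<Suc n]. v i \<le> max (v (s1 i)) (v (s2 i)))"
    by (rule ball_map_iff, rule lin1_two) (use na nb in \<open>auto simp: s1_def s2_def NN_def\<close>)
  have m4': "(\<forall>bl\<in>set (map (\<lambda>k. (1, lin1 {n+a+2} {s1 k})) [1..<Suc a]). hsat (fst bl) NN (snd bl) v)
      \<longleftrightarrow> (\<forall>k\<in>set [1..<Suc a]. v (s1 k) \<le> v (n+a+2))"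
    by (rule ball_map_iff, rule lin1_one) (use na nb in \<open>auto simp: s1_def NN_def\<close>)
  have m5': "(\<forall>bl\<in>set (map (\<lambda>k. (1, lin1 {n+a+b+5} {s2 k})) [1..<Suc b]). hsat (fst bl) NN (snd bl) v)
      \<longleftrightarrow> (\<forall>k\<in>set [1..<Suc b]. v (s2 k) \<le> v (n+a+b+5))"
    by (rule ball_map_iff, rule lin1_one) (use na nb in \<open>auto simp: s2_def NN_def\<close>)
  have "(\<forall>bl\<in>set blocks. hsat (fst bl) NN (snd bl) v) \<longleftrightarrow>
      hsat m1 NN (reidx a s1 Q1) v \<and> hsat m2 NN (reidx b s2 Q2) v \<and>
      hsat 1 NN (lin1 {0} {n+a+1}) v \<and> hsat 1 NN (lin1 {0} {n+a+b+4}) v \<and>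
      hsat 1 NN (lin1 {n+a+1, n+a+b+4} {0}) v \<and>
      hsat 2 NN (quad2 (n+a+1) (n+a+3) (n+a+2)) v \<and> hsat 2 NN (quad2 (n+a+b+4) (n+a+b+6) (n+a+b+5)) v \<and>
      (\<forall>bl\<in>set (map (\<lambda>i. (1, lin1 {i} {s1 i})) [1..<Suc n]). hsat (fst bl) NN (snd bl) v) \<and>
      (\<forall>bl\<in>set (map (\<lambda>i. (1, lin1 {i} {s2 i})) [1..<Suc n]). hsat (fst bl) NN (snd bl) v) \<and>
      (\<forall>bl\<in>set (map (\<lambda>i. (1, lin1 {s1 i, s2 i} {i})) [1..<Suc n]). hsat (fst bl) NN (snd bl) v) \<and>
      (\<forall>bl\<in>set (map (\<lambda>k. (1, lin1 {n+a+2} {s1 k})) [1..<Suc a]). hsat (fst bl) NN (snd bl) v) \<and>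
      (\<forall>bl\<in>set (map (\<lambda>k. (1, lin1 {n+a+b+5} {s2 k})) [1..<Suc b]). hsat (fst bl) NN (snd bl) v)"
    unfolding blocks_def set_append ball_Un by simp
  also have "\<dots> \<longleftrightarrow> Cond v"
    unfolding r1 r2 l1 l2 l3 q1 q2 m1' m2' m3' m4' m5' Cond_def
    by (simp only: set_upt atLeastLessThanSuc_atLeastAtMost)
  finally show ?thesis using H by simp
qed

lemma sym_QQ:
  assumes "sym_metzler_family m1 a Q1" "sym_metzler_family m2 b Q2"
  shows "sym_metzler_family MM NN QQ"
  unfolding MM_def QQ_def
  by (rule sym_bdl) (auto simp: blocks_def sym_lin1 sym_lin1[simplified] sym_quad2
        intro: sym_reidx[OF inj1 rng1 assms(1)] sym_reidx[OF inj2 rng2 assms(2)])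

lemma MM_ge: "MM \<ge> 1"
  unfolding MM_def blocks_def by simp

end


lemma two_le_minf: "2 * (t::ereal) \<le> -\<infinity> \<Longrightarrow> t = -\<infinity>"
  by (cases t) auto

lemma ereal_cancel: "t \<noteq> \<infinity> \<Longrightarrow> ereal l + (ereal (-l) + t) = t"
  by (cases t) auto

lemma two_ne_inf: "(s::ereal) \<noteq> \<infinity> \<Longrightarrow> 2 * s \<noteq> \<infinity>"
  by (cases s) auto

context cons begin

lemma memW: "x \<in> metzler_spec MM NN QQ \<longleftrightarrow> x \<in> Tn NN \<and> Cond (xcoord x)"
proof
  assume x: "x \<in> metzler_spec MM NN QQ"
  then have xT: "x \<in> Tn NN" and h: "hsat MM NN QQ (xcoord x)" unfolding spec_eq by auto
  then show "x \<in> Tn NN \<and> Cond (xcoord x)" using sem[of "xcoord x"] Tn_xcoord'[OF xT] by simp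
next
  assume "x \<in> Tn NN \<and> Cond (xcoord x)"
  then show "x \<in> metzler_spec MM NN QQ" unfolding spec_eq using sem[of "xcoord x"] Tn_xcoord'[of x NN] by simp
qed

lemma memW_lst:
  assumes gfin: "\<And>k. 1 \<le> k \<Longrightarrow> k \<le> NN \<Longrightarrow> g k \<noteq> \<infinity>" and g0: "g 0 = 0" and c: "Cond g"
  shows "lst NN g \<in> metzler_spec MM NN QQ"
proof -
  have e: "(\<lambda>k. if k = 0 then 0 else g k) = g" using g0 by auto
  have vfin: "\<And>k. k \<le> NN \<Longrightarrow> g k \<noteq> \<infinity>" using gfin g0 by (case_tac "k = 0") auto
  show ?thesis unfolding mem_spec_lst e using sem[of g, OF g0 vfin] c gfin by auto
qed

lemma S1_sub:
  assumes P: "P \<in> metzler_spec m1 a Q1"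
  shows "take n P \<in> take n ` metzler_spec MM NN QQ"
proof -
  have PT: "P \<in> Tn a" and hP: "hsat m1 a Q1 (xcoord P)" using P unfolding spec_eq by auto
  define u where "u = xcoord P"
  have u0: "u 0 = 0" unfolding u_def by simp
  have ufin: "\<And>k. k \<le> a \<Longrightarrow> u k \<noteq> \<infinity>" unfolding u_def using Tn_xcoord'[OF PT] by blast
  define s where "s = (SUP k\<in>{1..a}. u k)"
  have sfin: "s \<noteq> \<infinity>" unfolding s_def by (rule SUP_fin_ne_inf) (use ufin in auto)
  have us: "\<And>k. k \<in> {1..a} \<Longrightarrow> u k \<le> s" unfolding s_def by (rule SUP_upper)
  define g where "g = (\<lambda>k. if k \<le> n then u k else if k \<le> n + a then u (k - n)
     else if k = n+a+1 then 0 else if k = n+a+2 then s else if k = n+a+3 then 2 * s else -\<infinity>)"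
  have g0: "g 0 = 0" unfolding g_def using u0 by simp
  have gfin: "\<And>k. 1 \<le> k \<Longrightarrow> k \<le> NN \<Longrightarrow> g k \<noteq> \<infinity>"
    unfolding g_def using ufin sfin two_ne_inf na by auto
  have c1: "hsat m1 a Q1 (g \<circ> s1)"
  proof -
    have "hsat m1 a Q1 (g \<circ> s1) = hsat m1 a Q1 u"
      by (rule hsat_cong) (auto simp: g_def s1_def u0)
    then show ?thesis using hP u_def by simp
  qed
  have c2: "hsat m2 b Q2 (g \<circ> s2)"
  proof -
    have "hsat m2 b Q2 (g \<circ> s2) = hsat m2 b Q2 (\<lambda>k. -\<infinity>)"
      by (rule hsat_cong) (auto simp: g_def s2_def)
    then show ?thesis using hsat_minf by simp
  qed
  have c3: "\<forall>i\<in>{1..n}. g (s1 i) \<le> g i" using na by (auto simp: g_def s1_def)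
  have c4: "\<forall>i\<in>{1..n}. g (s2 i) \<le> g i" by (auto simp: g_def s2_def)
  have c5: "\<forall>i\<in>{1..n}. g i \<le> max (g (s1 i)) (g (s2 i))" using na by (auto simp: g_def s1_def s2_def)
  have c6: "\<forall>k\<in>{1..a}. g (s1 k) \<le> g (n+a+2)" using us by (auto simp: g_def s1_def)
  have c7: "\<forall>k\<in>{1..b}. g (s2 k) \<le> g (n+a+b+5)" by (auto simp: g_def s2_def)
  have c8: "2 * g (n+a+2) \<le> g (n+a+1) + g (n+a+3)" by (simp add: g_def)
  have c9: "2 * g (n+a+b+5) \<le> g (n+a+b+4) + g (n+a+b+6)" by (simp add: g_def)
  have c10: "g (n+a+1) \<le> 0 \<and> g (n+a+b+4) \<le> 0 \<and> 0 \<le> max (g (n+a+1)) (g (n+a+b+4))"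
    by (simp add: g_def)
  have "Cond g" unfolding Cond_def using c1 c2 c3 c4 c5 c6 c7 c8 c9 c10 by blast
  then have W: "lst NN g \<in> metzler_spec MM NN QQ" using memW_lst[of g] gfin g0 by blast
  have "take n (lst NN g) = lst n g" using na by (intro take_lst) (simp add: NN_def)
  also have "\<dots> = lst n u" by (rule lst_cong) (simp add: g_def)
  also have "\<dots> = take n (lst a u)" using na by (simp add: take_lst)
  also have "lst a u = P" unfolding u_def using PT by (intro lst_xcoord) (simp add: Tn_def)
  finally show ?thesis using W by (metis image_eqI)
qed

lemma S2_sub:
  assumes P: "P \<in> metzler_spec m2 b Q2"
  shows "take n P \<in> take n ` metzler_spec MM NN QQ"
proof -
  have PT: "P \<in> Tn b" and hP: "hsat m2 b Q2 (xcoord P)" using P unfolding spec_eq by auto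
  define u where "u = xcoord P"
  have u0: "u 0 = 0" unfolding u_def by simp
  have ufin: "\<And>k. k \<le> b \<Longrightarrow> u k \<noteq> \<infinity>" unfolding u_def using Tn_xcoord'[OF PT] by blast
  define s where "s = (SUP k\<in>{1..b}. u k)"
  have sfin: "s \<noteq> \<infinity>" unfolding s_def by (rule SUP_fin_ne_inf) (use ufin in auto)
  have us: "\<And>k. k \<in> {1..b} \<Longrightarrow> u k \<le> s" unfolding s_def by (rule SUP_upper)
  define g where "g = (\<lambda>k. if k \<le> n then u k else if k \<le> n + a + 3 then -\<infinity>
     else if k \<le> n + a + 3 + b then u (k - (n + a + 3))
     else if k = n+a+b+4 then 0 else if k = n+a+b+5 then s else if k = n+a+b+6 then 2 * s else -\<infinity>)"
  have g0: "g 0 = 0" unfolding g_def using u0 by simp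
  have gfin: "\<And>k. 1 \<le> k \<Longrightarrow> k \<le> NN \<Longrightarrow> g k \<noteq> \<infinity>"
    unfolding g_def using ufin sfin two_ne_inf nb by auto
  have c2: "hsat m2 b Q2 (g \<circ> s2)"
  proof -
    have "hsat m2 b Q2 (g \<circ> s2) = hsat m2 b Q2 u"
      by (rule hsat_cong) (auto simp: g_def s2_def u0)
    then show ?thesis using hP u_def by simp
  qed
  have c1: "hsat m1 a Q1 (g \<circ> s1)"
  proof -
    have "hsat m1 a Q1 (g \<circ> s1) = hsat m1 a Q1 (\<lambda>k. -\<infinity>)"
      by (rule hsat_cong) (auto simp: g_def s1_def)
    then show ?thesis using hsat_minf by simp
  qed
  have c3: "\<forall>i\<in>{1..n}. g (s1 i) \<le> g i" using na nb by (auto simp: g_def s1_def)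
  have c4: "\<forall>i\<in>{1..n}. g (s2 i) \<le> g i" using na nb by (auto simp: g_def s2_def)
  have c5: "\<forall>i\<in>{1..n}. g i \<le> max (g (s1 i)) (g (s2 i))" using na nb by (auto simp: g_def s1_def s2_def)
  have c6: "\<forall>k\<in>{1..a}. g (s1 k) \<le> g (n+a+2)" by (auto simp: g_def s1_def)
  have c7: "\<forall>k\<in>{1..b}. g (s2 k) \<le> g (n+a+b+5)" using us by (auto simp: g_def s2_def)
  have c8: "2 * g (n+a+2) \<le> g (n+a+1) + g (n+a+3)" by (simp add: g_def)
  have c9: "2 * g (n+a+b+5) \<le> g (n+a+b+4) + g (n+a+b+6)" by (simp add: g_def)
  have c10: "g (n+a+1) \<le> 0 \<and> g (n+a+b+4) \<le> 0 \<and> 0 \<le> max (g (n+a+1)) (g (n+a+b+4))"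
    by (simp add: g_def)
  have "Cond g" unfolding Cond_def using c1 c2 c3 c4 c5 c6 c7 c8 c9 c10 by blast
  then have W: "lst NN g \<in> metzler_spec MM NN QQ" using memW_lst[of g] gfin g0 by blast
  have "take n (lst NN g) = lst n g" using nb by (intro take_lst) (simp add: NN_def)
  also have "\<dots> = lst n u" by (rule lst_cong) (simp add: g_def)
  also have "\<dots> = take n (lst b u)" using nb by (simp add: take_lst)
  also have "lst b u = P" unfolding u_def using PT by (intro lst_xcoord) (simp add: Tn_def)
  finally show ?thesis using W by (metis image_eqI)
qed

end


context cons begin

lemma W_sub:
  assumes x: "x \<in> metzler_spec MM NN QQ" and X1: "take n ` metzler_spec m1 a Q1 \<subseteq> X"
    and X2: "take n ` metzler_spec m2 b Q2 \<subseteq> X" and cX: "trop_convex X"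
  shows "take n x \<in> X"
proof -
  have xT: "x \<in> Tn NN" and c: "Cond (xcoord x)" using x memW by auto
  define v where "v = xcoord x"
  have vfin: "\<And>k. k \<le> NN \<Longrightarrow> v k \<noteq> \<infinity>" unfolding v_def using Tn_xcoord'[OF xT] by blast
  have v0: "v 0 = 0" unfolding v_def by simp
  have lx: "length x = NN" using xT by (simp add: Tn_def)
  have tx: "take n x = lst n v"
  proof -
    have "take n x = take n (lst NN v)" unfolding v_def using lst_xcoord[OF lx] by simp
    also have "\<dots> = lst n v" by (rule take_lst) (simp add: NN_def)
    finally show ?thesis .
  qed
  have hs1: "hsat m1 a Q1 (v \<circ> s1)" and hs2: "hsat m2 b Q2 (v \<circ> s2)"
    and L0: "v (n+a+1) \<le> 0" and M0: "v (n+a+b+4) \<le> 0" and LM: "0 \<le> max (v (n+a+1)) (v (n+a+b+4))"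
    and q1: "2 * v (n+a+2) \<le> v (n+a+1) + v (n+a+3)" and q2: "2 * v (n+a+b+5) \<le> v (n+a+b+4) + v (n+a+b+6)"
    and z1: "\<forall>i\<in>{1..n}. v (s1 i) \<le> v i" and z2: "\<forall>i\<in>{1..n}. v (s2 i) \<le> v i"
    and z3: "\<forall>i\<in>{1..n}. v i \<le> max (v (s1 i)) (v (s2 i))"
    and y1: "\<forall>k\<in>{1..a}. v (s1 k) \<le> v (n+a+2)" and y2: "\<forall>k\<in>{1..b}. v (s2 k) \<le> v (n+a+b+5)"
    using c unfolding Cond_def v_def by auto
  have fs1: "\<And>k. k \<le> a \<Longrightarrow> v (s1 k) \<noteq> \<infinity>" using vfin by (auto simp: s1_def NN_def)
  have fs2: "\<And>k. k \<le> b \<Longrightarrow> v (s2 k) \<noteq> \<infinity>" using vfin by (auto simp: s2_def NN_def)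
  have fromS2: "take n x \<in> X" if M: "v (n+a+b+4) = 0" and m: "\<forall>i\<in>{1..n}. v (s1 i) = -\<infinity>"
  proof -
    have yin: "lst b (v \<circ> s2) \<in> metzler_spec m2 b Q2"
    proof -
      have "hsat m2 b Q2 (\<lambda>k. if k = 0 then 0 else (v \<circ> s2) k) = hsat m2 b Q2 (v \<circ> s2)"
        by (rule hsat_cong) (use M in \<open>auto simp: s2_def\<close>)
      then show ?thesis unfolding mem_spec_lst using hs2 fs2 by auto
    qed
    have "take n (lst b (v \<circ> s2)) \<in> X" using X2 yin by blast
    moreover have "take n (lst b (v \<circ> s2)) = lst n (v \<circ> s2)" using nb by (rule take_lst)
    moreover have "lst n (v \<circ> s2) = lst n v"
    proof (rule lst_cong)
      fix i assume "1 \<le> i" "i \<le> n"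
      then have "v (s2 i) \<le> v i" "v i \<le> max (v (s1 i)) (v (s2 i))" "v (s1 i) = -\<infinity>"
        using z2 z3 m by auto
      then show "(v \<circ> s2) i = v i" by (simp add: antisym)
    qed
    ultimately show ?thesis using tx by simp
  qed
  have fromS1: "take n x \<in> X" if L: "v (n+a+1) = 0" and m: "\<forall>i\<in>{1..n}. v (s2 i) = -\<infinity>"
  proof -
    have yin: "lst a (v \<circ> s1) \<in> metzler_spec m1 a Q1"
    proof -
      have "hsat m1 a Q1 (\<lambda>k. if k = 0 then 0 else (v \<circ> s1) k) = hsat m1 a Q1 (v \<circ> s1)"
        by (rule hsat_cong) (use L in \<open>auto simp: s1_def\<close>)
      then show ?thesis unfolding mem_spec_lst using hs1 fs1 by auto
    qed
    have "take n (lst a (v \<circ> s1)) \<in> X" using X1 yin by blast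
    moreover have "take n (lst a (v \<circ> s1)) = lst n (v \<circ> s1)" using na by (rule take_lst)
    moreover have "lst n (v \<circ> s1) = lst n v"
    proof (rule lst_cong)
      fix i assume "1 \<le> i" "i \<le> n"
      then have "v (s1 i) \<le> v i" "v i \<le> max (v (s1 i)) (v (s2 i))" "v (s2 i) = -\<infinity>"
        using z1 z3 m by auto
      then show "(v \<circ> s1) i = v i" by (simp add: antisym)
    qed
    ultimately show ?thesis using tx by simp
  qed
  have f3: "v (n+a+3) \<noteq> \<infinity>" "v (n+a+b+6) \<noteq> \<infinity>" using vfin by (auto simp: NN_def)
  show ?thesis
  proof (cases "v (n+a+1) = -\<infinity>")
    case True
    then have E: "v (n+a+1) + v (n+a+3) = -\<infinity>" using f3 minf_plus by simp
    have "2 * v (n+a+2) \<le> -\<infinity>" using q1 unfolding E .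
    then have "v (n+a+2) = -\<infinity>" by (rule two_le_minf)
    then have m: "\<forall>i\<in>{1..n}. v (s1 i) = -\<infinity>"
    proof (intro ballI)
      fix i assume "i \<in> {1..n}"
      then have "i \<in> {1..a}" using na by auto
      then have "v (s1 i) \<le> v (n+a+2)" using y1 by blast
      then show "v (s1 i) = -\<infinity>" using \<open>v (n+a+2) = -\<infinity>\<close> by simp
    qed
    have "0 \<le> v (n+a+b+4)" using True LM by simp
    then have "v (n+a+b+4) = 0" using M0 by (rule antisym[rotated])
    then show ?thesis using fromS2 m by blast
  next
    case FL: False
    show ?thesis
    proof (cases "v (n+a+b+4) = -\<infinity>")
      case True
      then have E: "v (n+a+b+4) + v (n+a+b+6) = -\<infinity>" using f3 minf_plus by simp
      have "2 * v (n+a+b+5) \<le> -\<infinity>" using q2 unfolding E .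
      then have "v (n+a+b+5) = -\<infinity>" by (rule two_le_minf)
      then have m: "\<forall>i\<in>{1..n}. v (s2 i) = -\<infinity>"
    proof (intro ballI)
      fix i assume "i \<in> {1..n}"
      then have "i \<in> {1..b}" using nb by auto
      then have "v (s2 i) \<le> v (n+a+b+5)" using y2 by blast
      then show "v (s2 i) = -\<infinity>" using \<open>v (n+a+b+5) = -\<infinity>\<close> by simp
    qed
      have "0 \<le> v (n+a+1)" using True LM by simp
      then have "v (n+a+1) = 0" using L0 by (rule antisym[rotated])
      then show ?thesis using fromS1 m by blast
    next
      case FM: False
      obtain l where l: "v (n+a+1) = ereal l" using FL L0 by (cases "v (n+a+1)") auto
      obtain m where m: "v (n+a+b+4) = ereal m" using FM M0 by (cases "v (n+a+b+4)") auto
      define f1 where "f1 = (\<lambda>k. ereal (-l) + v (s1 k))"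
      define f2 where "f2 = (\<lambda>k. ereal (-m) + v (s2 k))"
      have pin: "lst a f1 \<in> metzler_spec m1 a Q1"
      proof -
        have "hsat m1 a Q1 (\<lambda>k. if k = 0 then 0 else f1 k) = hsat m1 a Q1 (\<lambda>k. ereal (-l) + (v \<circ> s1) k)"
          by (rule hsat_cong) (use l in \<open>auto simp: f1_def s1_def\<close>)
        moreover have "hsat m1 a Q1 (\<lambda>k. ereal (-l) + (v \<circ> s1) k)" using hs1 by (rule hsat_trans)
        moreover have "\<forall>k. 1 \<le> k \<and> k \<le> a \<longrightarrow> f1 k \<noteq> \<infinity>" using fs1 by (auto simp: f1_def ereal_ne_inf_plus)
        ultimately show ?thesis unfolding mem_spec_lst by simp
      qed
      have qin: "lst b f2 \<in> metzler_spec m2 b Q2"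
      proof -
        have "hsat m2 b Q2 (\<lambda>k. if k = 0 then 0 else f2 k) = hsat m2 b Q2 (\<lambda>k. ereal (-m) + (v \<circ> s2) k)"
          by (rule hsat_cong) (use m in \<open>auto simp: f2_def s2_def\<close>)
        moreover have "hsat m2 b Q2 (\<lambda>k. ereal (-m) + (v \<circ> s2) k)" using hs2 by (rule hsat_trans)
        moreover have "\<forall>k. 1 \<le> k \<and> k \<le> b \<longrightarrow> f2 k \<noteq> \<infinity>" using fs2 by (auto simp: f2_def ereal_ne_inf_plus)
        ultimately show ?thesis unfolding mem_spec_lst by simp
      qed
      have p1: "lst n f1 \<in> X" using X1 pin take_lst[OF na, of f1] by (metis image_eqI subsetD)
      have p2: "lst n f2 \<in> X" using X2 qin take_lst[OF nb, of f2] by (metis image_eqI subsetD)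
      have mx: "max (ereal l) (ereal m) = 0" using LM L0 M0 l m by (simp add: antisym)
      have "map2 (\<lambda>x y. max (ereal l + x) (ereal m + y)) (lst n f1) (lst n f2) \<in> X"
      proof -
        have "ereal l \<noteq> \<infinity>" "ereal m \<noteq> \<infinity>" by simp_all
        then show ?thesis using cX p1 p2 mx unfolding trop_convex_def by blast
      qed
      moreover have "map2 (\<lambda>x y. max (ereal l + x) (ereal m + y)) (lst n f1) (lst n f2) = lst n v"
        unfolding map2_lst
      proof (rule lst_cong)
        fix i assume i: "1 \<le> i" "i \<le> n"
        have "ereal l + f1 i = v (s1 i)" unfolding f1_def using fs1[of i] i na by (simp add: ereal_cancel)
        moreover have "ereal m + f2 i = v (s2 i)" unfolding f2_def using fs2[of i] i nb by (simp add: ereal_cancel)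
        moreover have "v i = max (v (s1 i)) (v (s2 i))" using z1 z2 z3 i by (auto intro: antisym)
        ultimately show "max (ereal l + f1 i) (ereal m + f2 i) = v i" by simp
      qed
      ultimately show ?thesis using tx by simp
    qed
  qed
qed

lemma take_W_Tn: "take n ` metzler_spec MM NN QQ \<subseteq> Tn n"
proof
  fix y assume "y \<in> take n ` metzler_spec MM NN QQ"
  then obtain x where x: "x \<in> metzler_spec MM NN QQ" "y = take n x" by auto
  then have "x \<in> Tn NN" unfolding spec_eq by auto
  then show "y \<in> Tn n" using x(2) set_take_subset[of n x] unfolding Tn_def by (auto simp: NN_def)
qed

end

theorem mainTheorem17:
  fixes n :: nat and S1 S2 :: "ereal list set"
  assumes "proj_metzler_spec n S1" and "proj_metzler_spec n S2"
  shows "proj_metzler_spec n (tconv n (S1 \<union> S2))"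
proof -
  obtain d1 m1 Q1 where h1: "m1 \<ge> 1" "sym_metzler_family m1 (n + d1) Q1" "S1 = take n ` metzler_spec m1 (n + d1) Q1"
    using assms(1) unfolding proj_metzler_spec_def by blast
  obtain d2 m2 Q2 where h2: "m2 \<ge> 1" "sym_metzler_family m2 (n + d2) Q2" "S2 = take n ` metzler_spec m2 (n + d2) Q2"
    using assms(2) unfolding proj_metzler_spec_def by blast
  interpret c: cons n "n + d1" "n + d2" m1 m2 Q1 Q2 by unfold_locales simp_all
  let ?W = "metzler_spec c.MM c.NN c.QQ"
  have eq: "tconv n (S1 \<union> S2) = take n ` ?W"
  proof
    have "take n ` ?W \<in> {X. X \<subseteq> Tn n \<and> S1 \<union> S2 \<subseteq> X \<and> trop_convex X}"
      using c.take_W_Tn c.S1_sub c.S2_sub h1(3) h2(3) take_convex[OF spec_convex] by auto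
    then show "tconv n (S1 \<union> S2) \<subseteq> take n ` ?W" unfolding tconv_def by (rule Inter_lower)
  next
    show "take n ` ?W \<subseteq> tconv n (S1 \<union> S2)"
      unfolding tconv_def
    proof (intro subsetI InterI)
      fix y X assume y: "y \<in> take n ` ?W" and X: "X \<in> {X. X \<subseteq> Tn n \<and> S1 \<union> S2 \<subseteq> X \<and> trop_convex X}"
      from y obtain x where x: "x \<in> ?W" "y = take n x" by auto
      show "y \<in> X" using c.W_sub[OF x(1)] X h1(3) h2(3) x(2) by auto
    qed
  qed
  have NN: "n + ((n + d1) + (n + d2) + 6) = c.NN" unfolding c.NN_def by simp
  have "c.MM \<ge> 1 \<and> sym_metzler_family c.MM c.NN c.QQ \<and> take n ` ?W = take n ` ?W"
    using c.MM_ge c.sym_QQ[OF h1(2) h2(2)] by simp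
  then show ?thesis unfolding proj_metzler_spec_def eq NN[symmetric] by blast
qed


end
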